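(* Let $T(X)=\sum_i V_i^*XV_i$ be a completely positive map on $M_d$ (acting on $H=\mathbb{C}^d$) with $T(I)\le I$ and finite stabilization index, and let $Q$ be its orbit-support projection. Then $T$ is corner-faithful if and only if \[ QH\cap\bigcap_i\ker(V_i^* )=\{0\}, \] equivalently, for every $0\ne v\in QH$ there exists $i$ with $V_i^*v\ne0$.
   Context: $d(T)=I-T(I)$; the stabilization index is $n_T=\min\{n\ge1: T^n(d(T))=0\}$. For positive semidefinite $x$, $\mathrm{supp}(x)$ is the orthogonal projection onto the range of $x$. The orbit-support projection is $Q=\bigvee_{k<n_T}\mathrm{supp}(T^k(d(T)))$. $T$ is corner-faithful if every $x\ge0$, $x\ne0$ with $\mathrm{supp}(x)\le Q$ satisfies $T(x)\ne0$. *)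

theory Defs
  imports "HOL-Analysis.Analysis"
begin

text \<open>Matrices in M_d(C) are modelled as complex^'n^'n with d = CARD('n);
  H = C^d is complex^'n.\<close>

definition cadj :: "complex^'n^'m \<Rightarrow> complex^'m^'n" where
  "cadj A = (\<chi> i j. cnj (A $ j $ i))"

text \<open>Hermitian form <v, A v> = sum_i conj(v_i) (A v)_i.\<close>
definition qform :: "complex^'n^'n \<Rightarrow> complex^'n \<Rightarrow> complex" where
  "qform A v = (\<Sum>i\<in>UNIV. cnj (v $ i) * (A *v v) $ i)"

text \<open>Positive semidefinite: <v, A v> >= 0 for all v (over C this forces A hermitian).\<close>
definition psd :: "complex^'n^'n \<Rightarrow> bool" where
  "psd A \<longleftrightarrow> (\<forall>v. Im (qform A v) = 0 \<and> Re (qform A v) \<ge> 0)"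

text \<open>Loewner order A <= B.\<close>
definition loewner_le :: "complex^'n^'n \<Rightarrow> complex^'n^'n \<Rightarrow> bool" where
  "loewner_le A B \<longleftrightarrow> psd (B - A)"

definition orth_proj :: "complex^'n^'n \<Rightarrow> bool" where
  "orth_proj P \<longleftrightarrow> P ** P = P \<and> cadj P = P"

text \<open>The orthogonal projection onto a subspace W.\<close>
definition proj_onto :: "(complex^'n) set \<Rightarrow> complex^'n^'n" where
  "proj_onto W = (THE P. orth_proj P \<and> range ((*v) P) = W)"

text \<open>Support projection: orthogonal projection onto the range of x.\<close>
definition supp :: "complex^'n^'n \<Rightarrow> complex^'n^'n" where
  "supp x = proj_onto (range ((*v) x))"

text \<open>Join of the projections supp(M k), k < n: the projection onto the
  (closed) linear span of their ranges, i.e. onto the sum of the subspaces.\<close>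
definition supp_join :: "nat \<Rightarrow> (nat \<Rightarrow> complex^'n^'n) \<Rightarrow> complex^'n^'n" where
  "supp_join n M = proj_onto {(\<Sum>k<n. u k) | u. \<forall>k<n. u k \<in> range ((*v) (supp (M k)))}"

definition defect :: "(complex^'n^'n \<Rightarrow> complex^'n^'n) \<Rightarrow> complex^'n^'n" where
  "defect T = mat 1 - T (mat 1)"

definition stab_index :: "(complex^'n^'n \<Rightarrow> complex^'n^'n) \<Rightarrow> nat" where
  "stab_index T = (LEAST n. n \<ge> 1 \<and> (T ^^ n) (defect T) = 0)"

definition orbit_supp :: "(complex^'n^'n \<Rightarrow> complex^'n^'n) \<Rightarrow> complex^'n^'n" where
  "orbit_supp T = supp_join (stab_index T) (\<lambda>k. (T ^^ k) (defect T))"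

definition corner_faithful :: "(complex^'n^'n \<Rightarrow> complex^'n^'n) \<Rightarrow> bool" where
  "corner_faithful T \<longleftrightarrow>
     (\<forall>x. psd x \<and> x \<noteq> 0 \<and> loewner_le (supp x) (orbit_supp T) \<longrightarrow> T x \<noteq> 0)"

end

theory Submission
  imports Defs
begin

definition cinner :: "complex^'n \<Rightarrow> complex^'n \<Rightarrow> complex" where
  "cinner x y = (\<Sum>i\<in>UNIV. cnj (x $ i) * y $ i)"

lemma qform_cinner: "qform A v = cinner v (A *v v)"
  by (simp add: qform_def cinner_def)

lemma cinner_add_right: "cinner x (y + z) = cinner x y + cinner x z"
  by (simp add: cinner_def distrib_left sum.distrib)
lemma cinner_add_left: "cinner (x + y) z = cinner x z + cinner y z"
  by (simp add: cinner_def distrib_right sum.distrib)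
lemma cinner_diff_right: "cinner x (y - z) = cinner x y - cinner x z"
  by (simp add: cinner_def right_diff_distrib sum_subtractf)
lemma cinner_diff_left: "cinner (x - y) z = cinner x z - cinner y z"
  by (simp add: cinner_def left_diff_distrib sum_subtractf)
lemma cinner_scale_right: "cinner x (c *s y) = c * cinner x y"
  by (simp add: cinner_def sum_distrib_left algebra_simps)
lemma cinner_scale_left: "cinner (c *s x) y = cnj c * cinner x y"
  by (simp add: cinner_def sum_distrib_left algebra_simps)
lemma cinner_zero_right[simp]: "cinner x 0 = 0"
  by (simp add: cinner_def)
lemma cinner_zero_left[simp]: "cinner 0 x = 0"
  by (simp add: cinner_def)
lemma cinner_commute: "cinner y x = cnj (cinner x y)"
  by (simp add: cinner_def mult.commute)
lemma cinner_sum_right: "cinner x (sum f S) = (\<Sum>j\<in>S. cinner x (f j))"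
  by (simp add: cinner_def sum_component sum_distrib_left sum.swap[of _ UNIV S])
lemma cinner_axis_left: "cinner (axis j 1) y = y $ j"
proof -
  have "\<And>i. cnj (axis j 1 $ i) * y $ i = (if i = j then y $ j else 0)"
    by (simp add: axis_def)
  then show ?thesis by (simp add: cinner_def)
qed
lemma cinner_axis_right: "cinner x (axis j 1) = cnj (x $ j)"
proof -
  have "\<And>i. cnj (x $ i) * axis j 1 $ i = (if i = j then cnj (x $ j) else 0)"
    by (simp add: axis_def)
  then show ?thesis by (simp add: cinner_def)
qed

lemma cinner_self: "cinner x x = of_real (\<Sum>i\<in>UNIV. (cmod (x $ i))\<^sup>2)"
  unfolding cinner_def of_real_sum complex_norm_square by (simp add: mult.commute)

lemma cinner_self_Re: "Re (cinner x x) \<ge> 0" "Im (cinner x x) = 0"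
  by (simp_all add: cinner_self sum_nonneg)

lemma cinner_self_eq_0: "cinner x x = 0 \<longleftrightarrow> x = 0"
proof
  assume "cinner x x = 0"
  then have "(\<Sum>i\<in>UNIV. (cmod (x $ i))\<^sup>2) = 0" unfolding cinner_self of_real_eq_0_iff .
  then have "\<forall>i. (cmod (x $ i))\<^sup>2 = 0" by (subst (asm) sum_nonneg_eq_0_iff) auto
  then show "x = 0" by (simp add: vec_eq_iff)
qed simp

lemma cinner_Re_inner: "inner z w = Re (cinner z w)"
  by (simp add: inner_vec_def cinner_def inner_complex_def)

lemma mat_axis: "(A *v axis j 1) $ i = A $ i $ j"
  by (simp add: matrix_vector_mult_def axis_def if_distrib cong: if_cong)

lemma mat_ext: "(\<And>x. A *v x = B *v x) \<Longrightarrow> A = (B :: 'a::comm_semiring_1^'n^'m)"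
  by (metis mat_axis vec_eq_iff)

lemma cinner_adj: "cinner w (A *v y) = cinner (cadj A *v w) y"
proof -
  have "cinner w (A *v y) = (\<Sum>i\<in>UNIV. \<Sum>j\<in>UNIV. cnj (w$i) * (A$i$j * y$j))"
    by (simp add: cinner_def matrix_vector_mult_def sum_distrib_left)
  also have "\<dots> = (\<Sum>j\<in>UNIV. \<Sum>i\<in>UNIV. cnj (w$i) * (A$i$j * y$j))"
    by (rule sum.swap)
  also have "\<dots> = cinner (cadj A *v w) y"
    unfolding cinner_def matrix_vector_mult_def cadj_def
    by (simp add: sum_distrib_right sum_distrib_left mult_ac)
  finally show ?thesis .
qed

lemma cadj_mult: "cadj (A ** B) = cadj B ** cadj A"
  by (simp add: cadj_def matrix_matrix_mult_def vec_eq_iff mult.commute)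
lemma cadj_cadj[simp]: "cadj (cadj A) = A"
  by (simp add: cadj_def vec_eq_iff)
lemma cadj_diff: "cadj (A - B) = cadj A - cadj B"
  by (simp add: cadj_def vec_eq_iff)
lemma cadj_zero[simp]: "cadj 0 = 0"
  by (simp add: cadj_def vec_eq_iff)

lemma cinner_sum_left: "cinner (sum f S) y = (\<Sum>j\<in>S. cinner (f j) y)"
  by (simp add: cinner_def sum_component sum_distrib_right sum.swap[of _ UNIV S])

definition csub :: "(complex^'n) set \<Rightarrow> bool" where
  "csub W \<longleftrightarrow> 0 \<in> W \<and> (\<forall>x\<in>W. \<forall>y\<in>W. x + y \<in> W) \<and> (\<forall>c. \<forall>x\<in>W. c *s x \<in> W)"

lemma csubI: "0 \<in> W \<Longrightarrow> (\<And>x y. x \<in> W \<Longrightarrow> y \<in> W \<Longrightarrow> x + y \<in> W)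
  \<Longrightarrow> (\<And>c x. x \<in> W \<Longrightarrow> c *s x \<in> W) \<Longrightarrow> csub W"
  unfolding csub_def by blast

lemma csub_subspace: "csub W \<Longrightarrow> subspace W"
proof -
  assume W: "csub W"
  have "c *\<^sub>R x = complex_of_real c *s x" for c and x :: "complex^'n"
    by (simp add: vec_eq_iff) (simp add: scaleR_conv_of_real)
  then show ?thesis using W unfolding csub_def subspace_def by metis
qed

lemma csub_sum: "csub W \<Longrightarrow> (\<And>j. j \<in> S \<Longrightarrow> f j \<in> W) \<Longrightarrow> sum f S \<in> W"
  using csub_subspace subspace_sum by blast

lemma csub_diff: "csub W \<Longrightarrow> x \<in> W \<Longrightarrow> y \<in> W \<Longrightarrow> x - y \<in> W"
proof -
  assume W: "csub W" "x \<in> W" "y \<in> W"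
  have "x - y = x + (-1) *s y" by (simp add: vec_eq_iff)
  then show ?thesis using W unfolding csub_def by metis
qed

lemma proj_exists:
  assumes W: "csub W"
  shows "\<exists>P. orth_proj P \<and> range ((*v) P) = W"
proof -
  have sub: "subspace W" using W csub_subspace by blast
  have spanW: "span W = W" using sub span_eq_iff by blast
  define good where "good x y \<longleftrightarrow> y \<in> W \<and> (\<forall>w\<in>W. cinner (x - y) w = 0)" for x y
  have ex: "\<exists>y. good x y" for x
  proof -
    obtain y z where y: "y \<in> span W" and z: "\<And>w. w \<in> span W \<Longrightarrow> orthogonal z w"
      and xyz: "x = y + z"
      using orthogonal_subspace_decomp_exists by blast
    have "cinner z w = 0" if "w \<in> W" for w
    proof -
      have "Re (cinner z w) = 0" using z[of w] that spanW by (simp add: orthogonal_def cinner_Re_inner)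
      moreover have "\<i> *s w \<in> W" using W that by (simp add: csub_def)
      then have "Re (cinner z (\<i> *s w)) = 0" using z spanW by (simp add: orthogonal_def cinner_Re_inner)
      then have "Im (cinner z w) = 0" by (simp add: cinner_scale_right)
      ultimately show ?thesis by (simp add: complex_eq_iff)
    qed
    then show ?thesis using y spanW xyz unfolding good_def by (intro exI[of _ y]) auto
  qed
  have uniq: "y = y'" if "good x y" "good x y'" for x y y'
  proof -
    have d: "y' - y \<in> W" using that csub_diff[OF W] unfolding good_def by blast
    have e: "y' - y = (x - y) - (x - y')" by simp
    have "cinner (y' - y) (y' - y) = cinner (x - y) (y' - y) - cinner (x - y') (y' - y)"
      by (subst e, subst cinner_diff_left) simp
    also have "\<dots> = 0" using that d unfolding good_def by simp
    finally show ?thesis using cinner_self_eq_0 by (metis eq_iff_diff_eq_0)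
  qed
  define p where "p x = (THE y. good x y)" for x
  have pgood: "good x (p x)" for x
    unfolding p_def using ex uniq by (metis theI)
  define P where "P = (\<chi> i j. p (axis j 1) $ i)"
  have Pv: "P *v x = (\<Sum>j\<in>UNIV. x $ j *s p (axis j 1))" for x
    by (simp add: P_def matrix_vector_mult_def vec_eq_iff sum_component mult.commute)
  have Pgood: "good x (P *v x)" for x
  proof -
    have "P *v x \<in> W" unfolding Pv
      by (rule csub_sum[OF W]) (use W pgood in \<open>auto simp: csub_def good_def\<close>)
    moreover have "cinner (x - P *v x) w = 0" if "w \<in> W" for w
    proof -
      have "cinner (P *v x) w = (\<Sum>j\<in>UNIV. cnj (x $ j) * cinner (p (axis j 1)) w)"
        unfolding Pv cinner_sum_left cinner_scale_left ..
      also have "\<dots> = (\<Sum>j\<in>UNIV. cnj (x $ j) * cinner (axis j 1) w)"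
      proof (rule sum.cong)
        fix j
        have "cinner (axis j 1 - p (axis j 1)) w = 0" using pgood that unfolding good_def by blast
        then show "cnj (x $ j) * cinner (p (axis j 1)) w = cnj (x $ j) * cinner (axis j 1) w"
          by (simp add: cinner_diff_left)
      qed simp
      also have "\<dots> = cinner x w" by (simp only: cinner_axis_left) (simp add: cinner_def)
      finally show ?thesis by (simp add: cinner_diff_left)
    qed
    ultimately show ?thesis unfolding good_def by blast
  qed
  have PW: "P *v x \<in> W" for x using Pgood unfolding good_def by blast
  have Pid: "P *v w = w" if "w \<in> W" for w
    using uniq[OF Pgood, of w w] that unfolding good_def by simp
  have rng: "range ((*v) P) = W" using PW Pid by (metis image_subsetI subsetI subset_antisym rangeI)
  have PP: "P ** P = P"
    by (rule mat_ext) (simp add: matrix_vector_mul_assoc[symmetric] Pid PW)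
  have ortho: "cinner (P *v a) (b - P *v b) = 0" for a b
  proof -
    have "cinner (b - P *v b) (P *v a) = 0" using Pgood PW unfolding good_def by blast
    then show ?thesis by (subst cinner_commute) simp
  qed
  have sa: "cinner (P *v a) b = cinner a (P *v b)" for a b
  proof -
    have "cinner (P *v a) b = cinner (P *v a) (P *v b)"
      using ortho[of a b] by (simp add: cinner_diff_right)
    moreover have "cinner a (P *v b) = cinner (P *v a) (P *v b)"
      using ortho[of b a] by (subst cinner_commute, subst (asm) cinner_diff_right, subst (2) cinner_commute) simp
    ultimately show ?thesis by simp
  qed
  have "cadj P = P"
  proof -
    have "cnj (P $ j $ i) = P $ i $ j" for i j
    proof -
      have "P $ j $ i = cinner (axis j 1) (P *v axis i 1)" by (simp add: cinner_axis_left mat_axis)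
      also have "\<dots> = cinner (P *v axis j 1) (axis i 1)" by (simp add: sa)
      also have "\<dots> = cnj (P $ i $ j)" by (simp add: cinner_axis_right mat_axis)
      finally show ?thesis by simp
    qed
    then show ?thesis by (simp add: cadj_def vec_eq_iff)
  qed
  then show ?thesis using PP rng unfolding orth_proj_def by blast
qed


lemma mv_scale: "A *v (c *s x) = c *s (A *v (x :: complex^'n))"
  by (simp add: vec_eq_iff matrix_vector_mult_def sum_distrib_left algebra_simps)

lemma csub_range: "csub (range ((*v) (A :: complex^'n^'m)))"
proof -
  have "0 = A *v 0" by simp
  then have "0 \<in> range ((*v) A)" by blast
  moreover have "x + y \<in> range ((*v) A)" if h: "x \<in> range ((*v) A)" "y \<in> range ((*v) A)" for x y
  proof -
    obtain a b where "x = A *v a" "y = A *v b" using h by blast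
    then have "x + y = A *v (a + b)" by (simp add: matrix_vector_right_distrib)
    then show ?thesis by blast
  qed
  moreover have "c *s x \<in> range ((*v) A)" if h: "x \<in> range ((*v) A)" for x c
  proof -
    obtain a where "x = A *v a" using h by blast
    then have "c *s x = A *v (c *s a)" by (simp add: mv_scale)
    then show ?thesis by blast
  qed
  ultimately show ?thesis by (rule csubI)
qed

lemma proj_fix: "orth_proj P \<Longrightarrow> u \<in> range ((*v) P) \<Longrightarrow> P *v u = u"
  unfolding orth_proj_def by (auto simp: matrix_vector_mul_assoc)

lemma proj_unique:
  assumes P: "orth_proj P" and P': "orth_proj P'" and r: "range ((*v) P) = range ((*v) P')"
  shows "P = P'"
proof -
  have a: "P' ** P = P"
  proof (rule mat_ext)
    fix x
    have h: "P *v x \<in> range ((*v) P')" unfolding r[symmetric] by (rule rangeI)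
    have "(P' ** P) *v x = P' *v (P *v x)" by (simp only: matrix_vector_mul_assoc)
    also have "\<dots> = P *v x" by (rule proj_fix[OF P' h])
    finally show "(P' ** P) *v x = P *v x" .
  qed
  have b: "P ** P' = P'"
  proof (rule mat_ext)
    fix x
    have h: "P' *v x \<in> range ((*v) P)" unfolding r by (rule rangeI)
    have "(P ** P') *v x = P *v (P' *v x)" by (simp only: matrix_vector_mul_assoc)
    also have "\<dots> = P' *v x" by (rule proj_fix[OF P h])
    finally show "(P ** P') *v x = P' *v x" .
  qed
  have "P = cadj (P' ** P)" using a P unfolding orth_proj_def by simp
  also have "\<dots> = P ** P'" using P P' unfolding orth_proj_def by (simp add: cadj_mult)
  finally show ?thesis using b by simp
qed

lemma proj_onto_props:
  assumes "csub W"
  shows "orth_proj (proj_onto W) \<and> range ((*v) (proj_onto W)) = W"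
proof -
  obtain P where P: "orth_proj P \<and> range ((*v) P) = W" using proj_exists[OF assms] by blast
  have "\<exists>!P. orth_proj P \<and> range ((*v) P) = W"
  proof (rule ex1I[of _ P])
    show "orth_proj P \<and> range ((*v) P) = W" by (rule P)
    fix y assume "orth_proj y \<and> range ((*v) y) = W"
    then show "y = P" using P proj_unique[of y P] by simp
  qed
  then show ?thesis unfolding proj_onto_def by (rule theI')
qed

lemma supp_props: "orth_proj (supp x) \<and> range ((*v) (supp x)) = range ((*v) x)"
  unfolding supp_def by (rule proj_onto_props[OF csub_range])

lemma csub_sumset:
  assumes R: "\<And>k. csub (R k)"
  shows "csub {(\<Sum>k<n. u k) | u. \<forall>k<n. u k \<in> R k}"
proof -
  have z: "0 \<in> {(\<Sum>k<n. u k) | u. \<forall>k<n. u k \<in> R k}"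
    using R unfolding csub_def by (intro CollectI exI[of _ "\<lambda>_. 0"]) auto
  have a: "x + y \<in> {(\<Sum>k<n. u k) | u. \<forall>k<n. u k \<in> R k}"
    if xin: "x \<in> {(\<Sum>k<n. u k) | u. \<forall>k<n. u k \<in> R k}" and yin: "y \<in> {(\<Sum>k<n. u k) | u. \<forall>k<n. u k \<in> R k}" for x y
  proof -
    obtain u where u: "x = (\<Sum>k<n. u k)" "\<forall>k<n. u k \<in> R k" using xin by blast
    obtain v where v: "y = (\<Sum>k<n. v k)" "\<forall>k<n. v k \<in> R k" using yin by blast
    show ?thesis using u v R unfolding csub_def
      by (intro CollectI exI[of _ "\<lambda>k. u k + v k"]) (auto simp: sum.distrib)
  qed
  have s: "c *s x \<in> {(\<Sum>k<n. u k) | u. \<forall>k<n. u k \<in> R k}"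
    if xin: "x \<in> {(\<Sum>k<n. u k) | u. \<forall>k<n. u k \<in> R k}" for x c
  proof -
    obtain u where u: "x = (\<Sum>k<n. u k)" "\<forall>k<n. u k \<in> R k" using xin by blast
    have "c *s (\<Sum>k<n. u k) = (\<Sum>k<n. c *s u k)"
      by (simp add: vec_eq_iff sum_component sum_distrib_left)
    then show ?thesis using u R unfolding csub_def
      by (intro CollectI exI[of _ "\<lambda>k. c *s u k"]) auto
  qed
  show ?thesis by (rule csubI[OF z a s])
qed

lemma orbit_supp_proj: "orth_proj (orbit_supp T)"
  unfolding orbit_supp_def supp_join_def
  using proj_onto_props[OF csub_sumset[OF csub_range]] by (rule conjunct1)

lemma proj_psd:
  assumes "orth_proj R" shows "psd R"
proof -
  have "qform R w = cinner (R *v w) (R *v w)" for w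
  proof -
    have "qform R w = cinner w (R *v (R *v w))"
      using assms unfolding orth_proj_def by (simp add: qform_cinner matrix_vector_mul_assoc)
    also have "\<dots> = cinner (R *v w) (R *v w)"
      using assms unfolding orth_proj_def by (simp add: cinner_adj)
    finally show ?thesis .
  qed
  then show ?thesis unfolding psd_def by (simp add: cinner_self_Re)
qed

lemma proj_orth:
  assumes "orth_proj Q" shows "cinner (Q *v a) (b - Q *v b) = 0"
proof -
  have "cinner (Q *v a) (b - Q *v b) = cinner a (Q *v (b - Q *v b))"
    using assms unfolding orth_proj_def by (metis cinner_adj)
  also have "\<dots> = 0" using assms unfolding orth_proj_def
    by (simp add: matrix_vector_mult_diff_distrib matrix_vector_mul_assoc)
  finally show ?thesis .
qed

lemma loewner_of_range:
  assumes P: "orth_proj P" and Q: "orth_proj Q" and r: "range ((*v) P) \<subseteq> range ((*v) Q)"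
  shows "loewner_le P Q"
proof -
  have QP: "Q ** P = P"
  proof (rule mat_ext)
    fix x
    have h: "P *v x \<in> range ((*v) Q)" using r by blast
    have "(Q ** P) *v x = Q *v (P *v x)" by (simp only: matrix_vector_mul_assoc)
    also have "\<dots> = P *v x" by (rule proj_fix[OF Q h])
    finally show "(Q ** P) *v x = P *v x" .
  qed
  have PQ: "P ** Q = P"
  proof -
    have "P ** Q = cadj (Q ** P)" using P Q unfolding orth_proj_def by (simp add: cadj_mult)
    then show ?thesis using QP P unfolding orth_proj_def by simp
  qed
  have "orth_proj (Q - P)"
  proof -
    have "(Q - P) ** (Q - P) = Q - P"
    proof (rule mat_ext)
      fix x
      have "((Q - P) ** (Q - P)) *v x = Q *v (Q *v x) - Q *v (P *v x) - (P *v (Q *v x) - P *v (P *v x))"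
        by (simp add: matrix_vector_mul_assoc[symmetric] matrix_vector_mult_diff_rdistrib
            matrix_vector_mult_diff_distrib)
      also have "\<dots> = (Q - P) *v x"
        using P Q QP PQ unfolding orth_proj_def
        by (simp add: matrix_vector_mul_assoc matrix_vector_mult_diff_rdistrib)
      finally show "((Q - P) ** (Q - P)) *v x = (Q - P) *v x" .
    qed
    then show ?thesis using P Q unfolding orth_proj_def by (simp add: cadj_diff)
  qed
  then show ?thesis unfolding loewner_le_def by (rule proj_psd)
qed

lemma range_of_loewner:
  assumes P: "orth_proj P" and Q: "orth_proj Q" and le: "loewner_le P Q"
  shows "range ((*v) P) \<subseteq> range ((*v) Q)"
proof
  fix u assume u: "u \<in> range ((*v) P)"
  define z where "z = u - Q *v u"
  have Pu: "P *v u = u" using proj_fix[OF P u] .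
  have qP: "qform P u = cinner u u" using Pu by (simp add: qform_cinner)
  have qQ: "qform Q u = cinner (Q *v u) (Q *v u)"
  proof -
    have "qform Q u = cinner u (Q *v (Q *v u))"
      using Q unfolding orth_proj_def by (simp add: qform_cinner matrix_vector_mul_assoc)
    also have "\<dots> = cinner (Q *v u) (Q *v u)"
      using Q unfolding orth_proj_def by (simp add: cinner_adj)
    finally show ?thesis .
  qed
  have o1: "cinner (Q *v u) z = 0" unfolding z_def by (rule proj_orth[OF Q])
  have o2: "cinner z (Q *v u) = 0" using o1 by (subst cinner_commute) simp
  have "cinner u u = cinner (Q *v u + z) (Q *v u + z)" unfolding z_def by simp
  also have "\<dots> = cinner (Q *v u) (Q *v u) + cinner z z"
    using o1 o2 by (simp add: cinner_add_left cinner_add_right)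
  finally have uu: "cinner u u = cinner (Q *v u) (Q *v u) + cinner z z" .
  have "qform (Q - P) u = qform Q u - qform P u"
    by (simp add: qform_cinner matrix_vector_mult_diff_rdistrib cinner_diff_right)
  also have "\<dots> = - cinner z z" using qP qQ uu by simp
  finally have "qform (Q - P) u = - cinner z z" .
  then have "Re (cinner z z) \<le> 0" using le unfolding loewner_le_def psd_def by (metis neg_0_le_iff_le uminus_complex.sel(1))
  then have "cinner z z = 0" using cinner_self_Re[of z] by (simp add: complex_eq_iff)
  then have "z = 0" using cinner_self_eq_0 by blast
  then have "u = Q *v u" unfolding z_def by simp
  then show "u \<in> range ((*v) Q)" by (metis rangeI)
qed


lemma qform_add: "qform A (u + y) = qform A u + cinner u (A *v y) + cinner y (A *v u) + qform A y"
  by (simp add: qform_cinner matrix_vector_right_distrib cinner_add_left cinner_add_right)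

lemma qform_scale: "qform A (c *s u) = cnj c * c * qform A u"
  by (simp add: qform_cinner mv_scale cinner_scale_left cinner_scale_right)

lemma psd_herm:
  assumes A: "psd A" shows "cadj A = A"
proof -
  have key: "cinner u (A *v y) = cnj (cinner y (A *v u))" for u y
  proof -
    define a where "a = cinner u (A *v y)"
    define b where "b = cinner y (A *v u)"
    have "Im (qform A (u + y)) = 0" "Im (qform A u) = 0" "Im (qform A y) = 0"
      using A unfolding psd_def by blast+
    then have h1: "Im a + Im b = 0" unfolding qform_add a_def b_def by simp
    have "Im (qform A (u + \<i> *s y)) = 0" "Im (qform A (\<i> *s y)) = 0"
      using A unfolding psd_def by blast+
    moreover have "qform A (u + \<i> *s y) = qform A u + \<i> * a - \<i> * b + qform A (\<i> *s y)"
      unfolding qform_add a_def b_def by (simp add: mv_scale cinner_scale_left cinner_scale_right)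
    ultimately have h2: "Re a - Re b = 0" using \<open>Im (qform A u) = 0\<close> by simp
    have "a = cnj b" using h1 h2 by (simp add: complex_eq_iff)
    then show ?thesis by (simp only: a_def b_def)
  qed
  have "A $ i $ j = cnj (A $ j $ i)" for i j
  proof -
    have e1: "cinner (axis i 1) (A *v axis j 1) = A $ i $ j" by (simp only: cinner_axis_left mat_axis)
    have e2: "cinner (axis j 1) (A *v axis i 1) = A $ j $ i" by (simp only: cinner_axis_left mat_axis)
    show ?thesis using key[of "axis i 1" "axis j 1"] unfolding e1 e2 .
  qed
  then have h: "cnj (A $ j $ i) = A $ i $ j" for i j by metis
  show ?thesis by (simp add: cadj_def vec_eq_iff h)
qed

lemma real_quad_aux:
  fixes R S :: real
  assumes h: "\<And>t. 0 \<le> 2*t*R + t^2*S" and S: "S \<ge> 0" and R: "R \<ge> 0"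
  shows "R = 0"
proof (rule ccontr)
  assume "R \<noteq> 0"
  then have Rp: "R > 0" using R by simp
  define t where "t = - R / (S + 1)"
  have e: "t*(S+1) = -R" unfolding t_def using S by (simp add: field_simps)
  have "(S+1)^2 * (2*t*R + t^2*S) = 2*R*(S+1)*(t*(S+1)) + S*(t*(S+1))^2"
    by (simp add: algebra_simps power2_eq_square)
  also have "\<dots> = -(R^2 * (S + 2))" unfolding e by (simp add: algebra_simps power2_eq_square)
  finally have "(S+1)^2 * (2*t*R + t^2*S) = -(R^2 * (S + 2))" .
  moreover have "(S+1)^2 * (2*t*R + t^2*S) \<ge> 0" using h[of t] by simp
  moreover have "R^2 * (S + 2) > 0" using Rp S by simp
  ultimately show False by linarith
qed

lemma psd_kernel:
  assumes A: "psd A" and q: "qform A u = 0" shows "A *v u = 0"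
proof -
  have herm: "cadj A = A" using psd_herm[OF A] .
  define y where "y = A *v u"
  define r where "r = cinner y y"
  have ay: "cinner u (A *v y) = r"
    unfolding r_def y_def by (subst cinner_adj) (simp add: herm)
  have f: "0 \<le> 2*t*Re r + t^2 * Re (qform A y)" for t :: real
  proof -
    have "Re (qform A (u + complex_of_real t *s y)) \<ge> 0" using A unfolding psd_def by blast
    moreover have "qform A (u + complex_of_real t *s y) = 2 * complex_of_real t * r + (complex_of_real t)^2 * qform A y"
      unfolding qform_add qform_scale using q ay
      by (simp add: mv_scale cinner_scale_left cinner_scale_right r_def y_def power2_eq_square)
    ultimately show ?thesis by (simp add: power2_eq_square)
  qed
  have "Re r = 0"
    by (rule real_quad_aux[OF f]) (use A cinner_self_Re in \<open>auto simp: psd_def r_def\<close>)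
  then have "r = 0" using cinner_self_Re[of y] unfolding r_def by (simp add: complex_eq_iff)
  then show ?thesis using cinner_self_eq_0 unfolding r_def y_def by blast
qed

definition outer :: "complex^'n \<Rightarrow> complex^'n \<Rightarrow> complex^'n^'n" where
  "outer v w = (\<chi> i j. v $ i * cnj (w $ j))"

lemma outer_mv: "outer v v *v w = cinner v w *s v"
  by (simp add: outer_def vec_eq_iff matrix_vector_mult_def cinner_def sum_distrib_left mult_ac)

lemma mult_outer: "A ** outer v w = outer (A *v v) w"
  by (simp add: outer_def vec_eq_iff matrix_matrix_mult_def matrix_vector_mult_def
      sum_distrib_left mult_ac)

lemma outer_zero: "outer 0 w = 0"
  by (simp add: outer_def vec_eq_iff)

lemma qform_sum: "qform (sum f S) w = (\<Sum>i\<in>S. qform (f i) w)"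
  by (induction S rule: infinite_finite_induct)
     (simp_all add: matrix_vector_mult_add_rdistrib cinner_add_right qform_cinner)


theorem proposition4p18:
  fixes V :: "nat \<Rightarrow> complex^'n^'n" and m :: nat
    and T :: "complex^'n^'n \<Rightarrow> complex^'n^'n"
  assumes T_def: "\<And>X. T X = (\<Sum>i<m. cadj (V i) ** X ** V i)"
    and subunital: "loewner_le (T (mat 1)) (mat 1)"
    and finite_index: "\<exists>n\<ge>1. (T ^^ n) (defect T) = 0"
  shows "(corner_faithful T \<longleftrightarrow>
            range ((*v) (orbit_supp T)) \<inter> (\<Inter>i<m. {v. cadj (V i) *v v = 0}) = {0})
       \<and> (corner_faithful T \<longleftrightarrow>
            (\<forall>v \<in> range ((*v) (orbit_supp T)). v \<noteq> 0 \<longrightarrow> (\<exists>i<m. cadj (V i) *v v \<noteq> 0)))"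
proof -
  define Q where "Q = orbit_supp T"
  have Qp: "orth_proj Q" unfolding Q_def by (rule orbit_supp_proj)
  define C where "C \<longleftrightarrow> (\<forall>v \<in> range ((*v) Q). v \<noteq> 0 \<longrightarrow> (\<exists>i<m. cadj (V i) *v v \<noteq> 0))"
  have setC: "(range ((*v) Q) \<inter> (\<Inter>i<m. {v. cadj (V i) *v v = 0}) = {0}) \<longleftrightarrow> C"
  proof
    assume h: "range ((*v) Q) \<inter> (\<Inter>i<m. {v. cadj (V i) *v v = 0}) = {0}"
    show C unfolding C_def
    proof (intro ballI impI)
      fix v assume "v \<in> range ((*v) Q)" "v \<noteq> 0"
      then show "\<exists>i<m. cadj (V i) *v v \<noteq> 0" using h by blast
    qed
  next
    assume c: C
    have z: "(0::complex^'n) \<in> range ((*v) Q)" by (metis matrix_vector_mult_0_right rangeI)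
    show "range ((*v) Q) \<inter> (\<Inter>i<m. {v. cadj (V i) *v v = 0}) = {0}"
      using c z unfolding C_def by auto
  qed
  have TV: "qform (T x) w = (\<Sum>i<m. qform x (V i *v w))" for x w
  proof -
    have "qform (T x) w = (\<Sum>i<m. qform (cadj (V i) ** x ** V i) w)"
      unfolding T_def by (rule qform_sum)
    also have "\<dots> = (\<Sum>i<m. qform x (V i *v w))"
    proof (rule sum.cong)
      fix i
      have "qform (cadj (V i) ** x ** V i) w = cinner w (cadj (V i) *v (x *v (V i *v w)))"
        by (simp only: qform_cinner matrix_vector_mul_assoc matrix_mul_assoc)
      also have "\<dots> = qform x (V i *v w)"
        by (simp only: cinner_adj cadj_cadj qform_cinner)
      finally show "qform (cadj (V i) ** x ** V i) w = qform x (V i *v w)" .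
    qed simp
    finally show ?thesis .
  qed
  have "corner_faithful T \<longleftrightarrow> C"
  proof
    assume cf: "corner_faithful T"
    show C unfolding C_def
    proof (intro ballI impI)
      fix v assume vQ: "v \<in> range ((*v) Q)" and v0: "v \<noteq> 0"
      show "\<exists>i<m. cadj (V i) *v v \<noteq> 0"
      proof (rule ccontr)
        assume "\<not> (\<exists>i<m. cadj (V i) *v v \<noteq> 0)"
        then have Vv: "\<And>i. i < m \<Longrightarrow> cadj (V i) *v v = 0" by blast
        define x where "x = outer v v"
        have xw: "x *v w = cinner v w *s v" for w unfolding x_def by (rule outer_mv)
        have "psd x" unfolding psd_def
        proof
          fix w
          have "qform x w = cinner v w * cinner w v"
            by (simp add: qform_cinner xw cinner_scale_right)
          also have "\<dots> = complex_of_real ((cmod (cinner v w))^2)"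
            by (subst (2) cinner_commute) (rule complex_norm_square[symmetric])
          finally show "Im (qform x w) = 0 \<and> 0 \<le> Re (qform x w)" by simp
        qed
        moreover have "x \<noteq> 0"
        proof
          assume "x = 0"
          then have "cinner v v *s v = 0" using xw[of v] by simp
          then show False using v0 cinner_self_eq_0 by auto
        qed
        moreover have "loewner_le (supp x) (orbit_supp T)"
        proof -
          have "range ((*v) x) \<subseteq> range ((*v) Q)"
          proof
            fix y assume "y \<in> range ((*v) x)"
            then obtain w where "y = x *v w" by blast
            then have "y = cinner v w *s v" by (simp add: xw)
            then show "y \<in> range ((*v) Q)" using vQ csub_range[of Q] unfolding csub_def by blast
          qed
          then have "range ((*v) (supp x)) \<subseteq> range ((*v) Q)" using supp_props[of x] by simp
          then show ?thesis using loewner_of_range supp_props Qp unfolding Q_def by blast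
        qed
        moreover have "T x = 0"
        proof -
          have "cadj (V i) ** x ** V i = 0" if "i < m" for i
            using Vv[OF that] by (simp add: x_def mult_outer outer_zero)
          then show ?thesis unfolding T_def by simp
        qed
        ultimately show False using cf unfolding corner_faithful_def by blast
      qed
    qed
  next
    assume c: C
    show "corner_faithful T" unfolding corner_faithful_def
    proof (intro allI impI notI)
      fix x assume hx: "psd x \<and> x \<noteq> 0 \<and> loewner_le (supp x) (orbit_supp T)" and Tx: "T x = 0"
      have px: "psd x" and x0: "x \<noteq> 0" and le: "loewner_le (supp x) Q" using hx unfolding Q_def by auto
      have rx: "range ((*v) x) \<subseteq> range ((*v) Q)"
        using range_of_loewner[OF conjunct1[OF supp_props] Qp le] supp_props[of x] by simp
      have herm: "cadj x = x" by (rule psd_herm[OF px])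
      have xV: "x ** V i = 0" if "i < m" for i
      proof (rule mat_ext)
        fix w
        have s0: "(\<Sum>i<m. qform x (V i *v w)) = 0" using TV[of x w] Tx by (simp add: qform_cinner)
        have "(\<Sum>i<m. Re (qform x (V i *v w))) = 0" using arg_cong[OF s0, of Re] by simp
        then have "\<forall>i\<in>{..<m}. Re (qform x (V i *v w)) = 0"
          using px unfolding psd_def by (subst (asm) sum_nonneg_eq_0_iff) auto
        then have "Re (qform x (V i *v w)) = 0" using that by blast
        moreover have "Im (qform x (V i *v w)) = 0" using px unfolding psd_def by blast
        ultimately have "qform x (V i *v w) = 0" by (simp add: complex_eq_iff)
        then have "x *v (V i *v w) = 0" by (rule psd_kernel[OF px])
        then show "(x ** V i) *v w = 0 *v w" by (simp add: matrix_vector_mul_assoc)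
      qed
      have Vx: "cadj (V i) ** x = 0" if "i < m" for i
      proof -
        have "cadj (V i) ** x = cadj (x ** V i)" by (simp add: cadj_mult herm)
        then show ?thesis using xV[OF that] by simp
      qed
      obtain u where u: "x *v u \<noteq> 0"
      proof -
        have "\<exists>u. x *v u \<noteq> 0"
        proof (rule ccontr)
          assume "\<not> (\<exists>u. x *v u \<noteq> 0)"
          then have "\<And>u. x *v u = 0 *v u" by simp
          then have "x = 0" by (rule mat_ext)
          then show False using x0 by simp
        qed
        then show ?thesis using that by blast
      qed
      have "x *v u \<in> range ((*v) Q)" using rx by blast
      then obtain i where i: "i < m" "cadj (V i) *v (x *v u) \<noteq> 0" using c u unfolding C_def by blast
      have "cadj (V i) *v (x *v u) = 0" using Vx[OF i(1)] by (simp add: matrix_vector_mul_assoc)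
      then show False using i(2) by simp
    qed
  qed
  then show ?thesis using setC unfolding C_def Q_def by blast
qed

end
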